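(* Assume (R). Writing $F_n'$, $F_n''$ for derivatives with respect to $u$: $$nF_{n-1}(u)=\begin{cases}F_n'(u),& n\ge2\text{ even},\\ 2F_n(u)+(4u+1)F_n'(u),& n\ge1\text{ odd},\end{cases}$$ $$(n)_2F_{n-2}(u)=\begin{cases}2F_n'(u)+(4u+1)F_n''(u),& n\ge2\text{ even},\\ 6F_n'(u)+(4u+1)F_n''(u),& n\ge3\text{ odd}.\end{cases}$$ For the coefficients, for $0\le k\le d_{n-1}$: $$n\hat f_{n-1,k}=\begin{cases}\hat f_{n,k+1},& n\ge2\text{ even},\\ (4k+2)\hat f_{n,k}+\hat f_{n,k+1},& n\ge1\text{ odd},\end{cases}$$ and for $0\le k\le d_{n-2}$: $$(n)_2\hat f_{n-2,k}=\begin{cases}(4k+2)\hat f_{n,k+1}+\hat f_{n,k+2},& n\ge2\text{ even},\\ (4k+6)\hat f_{n,k+1}+\hat f_{n,k+2},& n\ge3\text{ odd}.\end{cases}$$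
   Context: Let $(\alpha_n)_{n\ge0}$ be an arbitrary sequence of complex numbers with Appell polynomials $A_n(x)=\sum_{\nu=0}^{n}\binom{n}{\nu}\alpha_{n-\nu}x^\nu$; property (R) means $A_n(1-x)=(-1)^nA_n(x)$ for all $n\ge0$. Let $d_n=\lfloor n/2\rfloor$, $\delta_n=1$ if $n$ odd, $0$ otherwise. Under (R), for each $n\ge0$ there is a unique polynomial $F_n(u)=\sum_{k\ge0}f_{n,k}u^k$ of degree at most $d_n$ with $A_n(x)=(2x-1)^{\delta_n}F_n(x(x-1))$ (explicitly $f_{n,k}=2^{2k-n}\sum_{\nu=0}^{d_n-k}\binom{n}{2\nu}\binom{d_n-\nu}{k}S_{2\nu}(1)$ for $k\le d_n$, where $S_m(1)=\sum_{\mu=0}^m\binom m\mu 2^\mu\alpha_\mu$), and $f_{n,k}=0$ for $k>d_n$. Set $\hat f_{n,k}=k!\,f_{n,k}$. $(n)_2=n(n-1)$. *)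

theory Defs
  imports Complex_Main "HOL-Computational_Algebra.Polynomial"
begin

definition appellA :: "(nat \<Rightarrow> complex) \<Rightarrow> nat \<Rightarrow> complex \<Rightarrow> complex" where
  "appellA \<alpha> n x = (\<Sum>\<nu>\<le>n. of_nat (n choose \<nu>) * \<alpha> (n - \<nu>) * x ^ \<nu>)"

definition propR :: "(nat \<Rightarrow> complex) \<Rightarrow> bool" where
  "propR \<alpha> \<longleftrightarrow> (\<forall>n x. appellA \<alpha> n (1 - x) = (-1) ^ n * appellA \<alpha> n x)"

definition dd :: "nat \<Rightarrow> nat" where "dd n = n div 2"

definition S1 :: "(nat \<Rightarrow> complex) \<Rightarrow> nat \<Rightarrow> complex" where
  "S1 \<alpha> m = (\<Sum>\<mu>\<le>m. of_nat (m choose \<mu>) * 2 ^ \<mu> * \<alpha> \<mu>)"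

definition fc :: "(nat \<Rightarrow> complex) \<Rightarrow> nat \<Rightarrow> nat \<Rightarrow> complex" where
  "fc \<alpha> n k = (if k \<le> dd n then
      (2::complex) powi (2 * int k - int n) *
      (\<Sum>\<nu>\<le>dd n - k. of_nat (n choose (2*\<nu>)) * of_nat ((dd n - \<nu>) choose k) * S1 \<alpha> (2*\<nu>))
    else 0)"

definition fhat :: "(nat \<Rightarrow> complex) \<Rightarrow> nat \<Rightarrow> nat \<Rightarrow> complex" where
  "fhat \<alpha> n k = fact k * fc \<alpha> n k"

definition FF :: "(nat \<Rightarrow> complex) \<Rightarrow> nat \<Rightarrow> complex poly" where
  "FF \<alpha> n = (\<Sum>k\<le>dd n. monom (fc \<alpha> n k) k)"

end

theory Submission
  imports Defs
begin

lemma coeff_FF: "coeff (FF \<alpha> n) j = fc \<alpha> n j"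
  unfolding FF_def by (auto simp: coeff_sum fc_def)

lemma fc_alt: "fc \<alpha> n k = (\<Sum>\<nu>\<le>dd n. (2::complex) powi (2 * int k - int n) *
   (of_nat (n choose (2*\<nu>)) * of_nat ((dd n - \<nu>) choose k) * S1 \<alpha> (2*\<nu>)))"
proof (cases "k \<le> dd n")
  case True
  have "(\<Sum>\<nu>\<le>dd n - k. of_nat (n choose (2*\<nu>)) * of_nat ((dd n - \<nu>) choose k) * S1 \<alpha> (2*\<nu>))
      = (\<Sum>\<nu>\<le>dd n. of_nat (n choose (2*\<nu>)) * of_nat ((dd n - \<nu>) choose k) * S1 \<alpha> (2*\<nu>) :: complex)"
    by (rule sum.mono_neutral_left) auto
  then show ?thesis using True by (simp add: fc_def sum_distrib_left)
next
  case False
  then show ?thesis by (auto simp: fc_def intro!: sum.neutral)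
qed

lemma nat_id_even:
  assumes "\<nu> \<le> e"
  shows "(2*Suc e) * ((2*e+1) choose (2*\<nu>)) * ((e-\<nu>) choose k)
       = 2 * ((k+1) * ((2*Suc e) choose (2*\<nu>)) * ((Suc e-\<nu>) choose (k+1)))"
proof -
  have a: "(2*Suc e - 2*\<nu>) * ((2*Suc e) choose (2*\<nu>)) = (2*Suc e) * ((2*Suc e - 1) choose (2*\<nu>))"
    by (rule binomial_absorb_comp)
  have b: "Suc k * (Suc (e-\<nu>) choose Suc k) = Suc (e-\<nu>) * ((e-\<nu>) choose k)"
    by (rule Suc_times_binomial)
  have c: "Suc e - \<nu> = Suc (e - \<nu>)" "2*Suc e - 2*\<nu> = 2 * Suc (e-\<nu>)" "2*Suc e - 1 = 2*e+1"
    using assms by auto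
  show ?thesis using a b unfolding c by (metis (no_types, lifting) Suc_eq_plus1 mult.assoc mult.commute mult.left_commute)
qed

lemma nat_id_odd:
  assumes "\<nu> \<le> d"
  shows "2 * ((2*d+1) * ((2*d) choose (2*\<nu>)) * ((d-\<nu>) choose k))
       = (4*k+2) * ((2*d+1) choose (2*\<nu>)) * ((d-\<nu>) choose k)
         + 4 * ((k+1) * ((2*d+1) choose (2*\<nu>)) * ((d-\<nu>) choose (k+1)))"
proof -
  define m where "m = d - \<nu>"
  define B where "B = (2*d+1) choose (2*\<nu>)"
  have a: "(2*d+1 - 2*\<nu>) * ((2*d+1) choose (2*\<nu>)) = (2*d+1) * ((2*d+1 - 1) choose (2*\<nu>))"
    by (rule binomial_absorb_comp)
  have a': "(2*d+1) * ((2*d) choose (2*\<nu>)) = (2*m+1) * B"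
    using a assms unfolding m_def B_def by (simp add: Suc_diff_le diff_mult_distrib2)
  have b: "Suc k * (m choose Suc k) = (m - k) * (m choose k)"
    using binomial_absorption[of k m] binomial_absorb_comp[of m k] by simp
  have "2 * ((2*m+1) * B * (m choose k)) = (4*k+2) * B * (m choose k) + 4 * (((m-k) * (m choose k)) * B)"
  proof (cases "k \<le> m")
    case True
    then obtain j where "m = k + j" using le_Suc_ex by blast
    then show ?thesis by (simp add: algebra_simps)
  next
    case False
    then show ?thesis by simp
  qed
  note main = this
  have e1: "2 * ((2*d+1) * ((2*d) choose (2*\<nu>)) * (m choose k)) = 2 * ((2*m+1) * B * (m choose k))"
    by (simp only: a')
  have e2: "(m-k) * (m choose k) * B = (k+1) * B * (m choose (k+1))"
    using b by (metis Suc_eq_plus1 mult.commute mult.left_commute)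
  have "2 * ((2*d+1) * ((2*d) choose (2*\<nu>)) * (m choose k))
       = (4*k+2) * B * (m choose k) + 4 * ((k+1) * B * (m choose (k+1)))"
    unfolding e1 main e2 ..
  then show ?thesis unfolding m_def B_def .
qed

lemma fc_even:
  assumes n: "n = 2*Suc e"
  shows "of_nat n * fc \<alpha> (n-1) k = of_nat (k+1) * fc \<alpha> n (k+1)"
proof -
  have d1: "dd n = Suc e" "dd (n-1) = e" "n - 1 = 2*e+1" using n by (auto simp: dd_def)
  define P :: complex where "P = 2 powi (2 * int k - int (2*e+1))"
  have P2: "(2::complex) powi (2 * int (k+1) - int n) = P * 2"
  proof -
    have "2 * int (k+1) - int n = (2 * int k - int (2*e+1)) + 1" using n by simp
    then have "(2::complex) powi (2 * int (k+1) - int n) = 2 powi ((2 * int k - int (2*e+1)) + 1)"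
      by (simp only:)
    also have "\<dots> = P * 2" unfolding P_def by (rule power_int_add_1) simp
    finally show ?thesis .
  qed
  have "of_nat (k+1) * fc \<alpha> n (k+1) = of_nat (k+1) * (\<Sum>\<nu>\<le>e. P * 2 *
     (of_nat (n choose (2*\<nu>)) * of_nat ((Suc e - \<nu>) choose (k+1)) * S1 \<alpha> (2*\<nu>)))"
    unfolding fc_alt[of \<alpha> n "k+1"] d1 P2 by simp
  also have "\<dots> = (\<Sum>\<nu>\<le>e. of_nat n * (P *
     (of_nat ((2*e+1) choose (2*\<nu>)) * of_nat ((e - \<nu>) choose k) * S1 \<alpha> (2*\<nu>))))"
    unfolding sum_distrib_left
  proof (rule sum.cong[OF refl])
    fix \<nu> assume "\<nu> \<in> {..e}"
    then have "\<nu> \<le> e" by simp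
    from nat_id_even[OF this, of k]
    have nf: "n * ((2*e+1) choose (2*\<nu>)) * ((e-\<nu>) choose k)
       = 2 * ((k+1) * (n choose (2*\<nu>)) * ((Suc e-\<nu>) choose (k+1)))"
      unfolding n .
    have "of_nat (k+1) * (P * 2 *
     (of_nat (n choose (2*\<nu>)) * of_nat ((Suc e - \<nu>) choose (k+1)) * S1 \<alpha> (2*\<nu>)))
      = P * S1 \<alpha> (2*\<nu>) * of_nat (2 * ((k+1) * (n choose (2*\<nu>)) * ((Suc e-\<nu>) choose (k+1))))"
      by (simp add: algebra_simps)
    also have "\<dots> = P * S1 \<alpha> (2*\<nu>) * of_nat (n * ((2*e+1) choose (2*\<nu>)) * ((e-\<nu>) choose k))"
      unfolding nf ..
    also have "\<dots> = of_nat n * (P *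
     (of_nat ((2*e+1) choose (2*\<nu>)) * of_nat ((e - \<nu>) choose k) * S1 \<alpha> (2*\<nu>)))"
      by (simp add: algebra_simps)
    finally show "of_nat (k+1) * (P * 2 *
     (of_nat (n choose (2*\<nu>)) * of_nat ((Suc e - \<nu>) choose (k+1)) * S1 \<alpha> (2*\<nu>)))
      = of_nat n * (P *
     (of_nat ((2*e+1) choose (2*\<nu>)) * of_nat ((e - \<nu>) choose k) * S1 \<alpha> (2*\<nu>)))" .
  qed
  also have "\<dots> = of_nat n * fc \<alpha> (n-1) k"
    unfolding fc_alt[of \<alpha> "n-1" k] d1(2) unfolding d1(3) P_def sum_distrib_left by simp
  finally show ?thesis by simp
qed

lemma fc_odd:
  assumes n: "n = 2*d+1"
  shows "of_nat n * fc \<alpha> (n-1) k = of_nat (4*k+2) * fc \<alpha> n k + of_nat (k+1) * fc \<alpha> n (k+1)"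
proof -
  have d1: "dd n = d" "dd (n-1) = d" "n - 1 = 2*d" using n by (auto simp: dd_def)
  define P :: complex where "P = 2 powi (2 * int k - int n)"
  have P2: "(2::complex) powi (2 * int (k+1) - int n) = P * 4"
  proof -
    have "2 * int (k+1) - int n = ((2 * int k - int n) + 1) + 1" by simp
    then have "(2::complex) powi (2 * int (k+1) - int n) = 2 powi (((2 * int k - int n) + 1) + 1)"
      by (simp only:)
    also have "\<dots> = 2 powi ((2 * int k - int n) + 1) * 2" by (rule power_int_add_1) simp
    also have "\<dots> = P * 2 * 2" unfolding P_def by (subst power_int_add_1) simp_all
    finally show ?thesis by simp
  qed
  have P1: "(2::complex) powi (2 * int k - int (n-1)) = P * 2"
  proof -
    have "2 * int k - int (n-1) = (2 * int k - int n) + 1" using n by simp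
    then have "(2::complex) powi (2 * int k - int (n-1)) = 2 powi ((2 * int k - int n) + 1)"
      by (simp only:)
    also have "\<dots> = P * 2" unfolding P_def by (rule power_int_add_1) simp
    finally show ?thesis .
  qed
  have "of_nat (4*k+2) * fc \<alpha> n k + of_nat (k+1) * fc \<alpha> n (k+1) =
     (\<Sum>\<nu>\<le>d. of_nat (4*k+2) * (P *
     (of_nat (n choose (2*\<nu>)) * of_nat ((d - \<nu>) choose k) * S1 \<alpha> (2*\<nu>))) +
      of_nat (k+1) * (P * 4 *
     (of_nat (n choose (2*\<nu>)) * of_nat ((d - \<nu>) choose (k+1)) * S1 \<alpha> (2*\<nu>))))"
    unfolding fc_alt[of \<alpha> n k] fc_alt[of \<alpha> n "k+1"] d1 P2 P_def[symmetric]
    by (simp add: sum.distrib sum_distrib_left)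
  also have "\<dots> = (\<Sum>\<nu>\<le>d. of_nat n * (P * 2 *
     (of_nat ((2*d) choose (2*\<nu>)) * of_nat ((d - \<nu>) choose k) * S1 \<alpha> (2*\<nu>))))"
  proof (rule sum.cong[OF refl])
    fix \<nu> assume "\<nu> \<in> {..d}"
    then have "\<nu> \<le> d" by simp
    from nat_id_odd[OF this, of k]
    have nf: "2 * (n * ((2*d) choose (2*\<nu>)) * ((d-\<nu>) choose k))
       = (4*k+2) * (n choose (2*\<nu>)) * ((d-\<nu>) choose k)
         + 4 * ((k+1) * (n choose (2*\<nu>)) * ((d-\<nu>) choose (k+1)))"
      unfolding n .
    have "of_nat (4*k+2) * (P *
     (of_nat (n choose (2*\<nu>)) * of_nat ((d - \<nu>) choose k) * S1 \<alpha> (2*\<nu>))) +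
      of_nat (k+1) * (P * 4 *
     (of_nat (n choose (2*\<nu>)) * of_nat ((d - \<nu>) choose (k+1)) * S1 \<alpha> (2*\<nu>)))
     = P * S1 \<alpha> (2*\<nu>) * of_nat ((4*k+2) * (n choose (2*\<nu>)) * ((d-\<nu>) choose k)
         + 4 * ((k+1) * (n choose (2*\<nu>)) * ((d-\<nu>) choose (k+1))))"
      by (simp add: algebra_simps)
    also have "\<dots> = P * S1 \<alpha> (2*\<nu>) * of_nat (2 * (n * ((2*d) choose (2*\<nu>)) * ((d-\<nu>) choose k)))"
      unfolding nf ..
    also have "\<dots> = of_nat n * (P * 2 *
     (of_nat ((2*d) choose (2*\<nu>)) * of_nat ((d - \<nu>) choose k) * S1 \<alpha> (2*\<nu>)))"
      by (simp add: algebra_simps)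
    finally show "of_nat (4*k+2) * (P *
     (of_nat (n choose (2*\<nu>)) * of_nat ((d - \<nu>) choose k) * S1 \<alpha> (2*\<nu>))) +
      of_nat (k+1) * (P * 4 *
     (of_nat (n choose (2*\<nu>)) * of_nat ((d - \<nu>) choose (k+1)) * S1 \<alpha> (2*\<nu>)))
      = of_nat n * (P * 2 *
     (of_nat ((2*d) choose (2*\<nu>)) * of_nat ((d - \<nu>) choose k) * S1 \<alpha> (2*\<nu>)))" .
  qed
  also have "\<dots> = of_nat n * fc \<alpha> (n-1) k"
    unfolding fc_alt[of \<alpha> "n-1" k] d1(2) P1 unfolding d1(3) sum_distrib_left by simp
  finally show ?thesis by simp
qed


lemma fhat_even:
  assumes n: "n = 2*Suc e"
  shows "of_nat n * fhat \<alpha> (n-1) k = fhat \<alpha> n (k+1)"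
  using fc_even[OF n, of \<alpha> k] unfolding fhat_def
  by (simp add: algebra_simps)

lemma fhat_odd:
  assumes n: "n = 2*d+1"
  shows "of_nat n * fhat \<alpha> (n-1) k = of_nat (4*k+2) * fhat \<alpha> n k + fhat \<alpha> n (k+1)"
proof -
  have "of_nat n * fhat \<alpha> (n-1) k = fact k * (of_nat n * fc \<alpha> (n-1) k)"
    unfolding fhat_def by (simp add: algebra_simps)
  also have "\<dots> = fact k * (of_nat (4*k+2) * fc \<alpha> n k + of_nat (k+1) * fc \<alpha> n (k+1))"
    unfolding fc_odd[OF n] ..
  also have "\<dots> = of_nat (4*k+2) * fhat \<alpha> n k + fhat \<alpha> n (k+1)"
    unfolding fhat_def by (simp add: algebra_simps)
  finally show ?thesis .
qed

lemma PE:
  assumes n: "n = 2*Suc e"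
  shows "smult (of_nat n) (FF \<alpha> (n-1)) = pderiv (FF \<alpha> n)"
proof (rule poly_eqI)
  fix k
  show "coeff (smult (of_nat n) (FF \<alpha> (n-1))) k = coeff (pderiv (FF \<alpha> n)) k"
    using fc_even[OF n, of \<alpha> k] by (simp add: coeff_pderiv coeff_FF algebra_simps)
qed

lemma PO:
  assumes n: "n = 2*d+1"
  shows "smult (of_nat n) (FF \<alpha> (n-1)) = smult 2 (FF \<alpha> n) + [:1,4:] * pderiv (FF \<alpha> n)"
proof (rule poly_eqI)
  fix k
  show "coeff (smult (of_nat n) (FF \<alpha> (n-1))) k = coeff (smult 2 (FF \<alpha> n) + [:1,4:] * pderiv (FF \<alpha> n)) k"
  proof (cases k)
    case 0
    then show ?thesis using fc_odd[OF n, of \<alpha> 0] by (simp add: coeff_pderiv coeff_FF)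
  next
    case (Suc j)
    then show ?thesis using fc_odd[OF n, of \<alpha> k]
      by (simp add: coeff_pderiv coeff_FF algebra_simps)
  qed
qed

lemma PE2:
  assumes n: "n = 2*Suc e"
  shows "smult (of_nat n * of_nat (n-1)) (FF \<alpha> (n-2))
     = smult 2 (pderiv (FF \<alpha> n)) + [:1,4:] * pderiv (pderiv (FF \<alpha> n))"
proof -
  have n1: "n - 1 = 2*e+1" "n-1-1 = n-2" using n by auto
  have "smult (of_nat n * of_nat (n-1)) (FF \<alpha> (n-2))
     = smult (of_nat n) (smult (of_nat (n-1)) (FF \<alpha> (n-1-1)))" unfolding n1(2) by simp
  also have "\<dots> = smult (of_nat n) (smult 2 (FF \<alpha> (n-1)) + [:1,4:] * pderiv (FF \<alpha> (n-1)))"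
    unfolding PO[OF n1(1)] ..
  also have "\<dots> = smult 2 (smult (of_nat n) (FF \<alpha> (n-1))) + [:1,4:] * pderiv (smult (of_nat n) (FF \<alpha> (n-1)))"
    by (simp add: smult_add_right pderiv_smult mult.commute)
  also have "\<dots> = smult 2 (pderiv (FF \<alpha> n)) + [:1,4:] * pderiv (pderiv (FF \<alpha> n))"
    unfolding PE[OF n] ..
  finally show ?thesis .
qed

lemma PO2:
  assumes n: "n = 2*d+1" and d: "d \<ge> 1"
  shows "smult (of_nat n * of_nat (n-1)) (FF \<alpha> (n-2))
     = smult 6 (pderiv (FF \<alpha> n)) + [:1,4:] * pderiv (pderiv (FF \<alpha> n))"
proof -
  have n1: "n - 1 = 2*Suc (d-1)" "n-1-1 = n-2" using n d by auto
  have "smult (of_nat n * of_nat (n-1)) (FF \<alpha> (n-2))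
     = smult (of_nat n) (smult (of_nat (n-1)) (FF \<alpha> (n-1-1)))" unfolding n1(2) by simp
  also have "\<dots> = smult (of_nat n) (pderiv (FF \<alpha> (n-1)))"
    unfolding PE[OF n1(1)] ..
  also have "\<dots> = pderiv (smult (of_nat n) (FF \<alpha> (n-1)))"
    by (simp add: pderiv_smult)
  also have "\<dots> = pderiv (smult 2 (FF \<alpha> n) + [:1,4:] * pderiv (FF \<alpha> n))"
    unfolding PO[OF n] ..
  also have "\<dots> = smult 6 (pderiv (FF \<alpha> n)) + [:1,4:] * pderiv (pderiv (FF \<alpha> n))"
    by (simp add: pderiv_add pderiv_smult pderiv_mult pderiv_pCons algebra_simps flip: smult_add_left)
  finally show ?thesis .
qed

theorem mainTheorem14:
  fixes \<alpha> :: "nat \<Rightarrow> complex"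
  assumes R: "propR \<alpha>"
  shows
   "(\<forall>n u. n \<ge> 2 \<and> even n \<longrightarrow>
       of_nat n * poly (FF \<alpha> (n-1)) u = poly (pderiv (FF \<alpha> n)) u)
  \<and> (\<forall>n u. n \<ge> 1 \<and> odd n \<longrightarrow>
       of_nat n * poly (FF \<alpha> (n-1)) u
         = 2 * poly (FF \<alpha> n) u + (4*u+1) * poly (pderiv (FF \<alpha> n)) u)
  \<and> (\<forall>n u. n \<ge> 2 \<and> even n \<longrightarrow>
       of_nat (n*(n-1)) * poly (FF \<alpha> (n-2)) u
         = 2 * poly (pderiv (FF \<alpha> n)) u + (4*u+1) * poly (pderiv (pderiv (FF \<alpha> n))) u)
  \<and> (\<forall>n u. n \<ge> 3 \<and> odd n \<longrightarrow>
       of_nat (n*(n-1)) * poly (FF \<alpha> (n-2)) u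
         = 6 * poly (pderiv (FF \<alpha> n)) u + (4*u+1) * poly (pderiv (pderiv (FF \<alpha> n))) u)
  \<and> (\<forall>n k. n \<ge> 2 \<and> even n \<and> k \<le> dd (n-1) \<longrightarrow>
       of_nat n * fhat \<alpha> (n-1) k = fhat \<alpha> n (k+1))
  \<and> (\<forall>n k. n \<ge> 1 \<and> odd n \<and> k \<le> dd (n-1) \<longrightarrow>
       of_nat n * fhat \<alpha> (n-1) k = of_nat (4*k+2) * fhat \<alpha> n k + fhat \<alpha> n (k+1))
  \<and> (\<forall>n k. n \<ge> 2 \<and> even n \<and> k \<le> dd (n-2) \<longrightarrow>
       of_nat (n*(n-1)) * fhat \<alpha> (n-2) k
         = of_nat (4*k+2) * fhat \<alpha> n (k+1) + fhat \<alpha> n (k+2))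
  \<and> (\<forall>n k. n \<ge> 3 \<and> odd n \<and> k \<le> dd (n-2) \<longrightarrow>
       of_nat (n*(n-1)) * fhat \<alpha> (n-2) k
         = of_nat (4*k+6) * fhat \<alpha> n (k+1) + fhat \<alpha> n (k+2))"
proof (intro conjI allI impI; elim conjE)
  fix n :: nat and u :: complex assume "n \<ge> 2" "even n"
  then obtain e where n: "n = 2*Suc e" by (metis evenE Suc_pred' le_numeral_extra(2) mult_0_right not_less_eq_eq numeral_2_eq_2 zero_less_iff_neq_zero Suc_le_eq)
  show "of_nat n * poly (FF \<alpha> (n-1)) u = poly (pderiv (FF \<alpha> n)) u"
    using arg_cong[OF PE[OF n, of \<alpha>], of "\<lambda>p. poly p u"] by simp
next
  fix n :: nat and u :: complex assume "n \<ge> 1" "odd n"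
  then obtain d where n: "n = 2*d+1" by (metis oddE)
  show "of_nat n * poly (FF \<alpha> (n-1)) u
         = 2 * poly (FF \<alpha> n) u + (4*u+1) * poly (pderiv (FF \<alpha> n)) u"
    using arg_cong[OF PO[OF n, of \<alpha>], of "\<lambda>p. poly p u"] by (simp add: algebra_simps)
next
  fix n :: nat and u :: complex assume "n \<ge> 2" "even n"
  then obtain e where n: "n = 2*Suc e" by (metis evenE Suc_pred' le_numeral_extra(2) mult_0_right not_less_eq_eq numeral_2_eq_2 zero_less_iff_neq_zero Suc_le_eq)
  show "of_nat (n*(n-1)) * poly (FF \<alpha> (n-2)) u
         = 2 * poly (pderiv (FF \<alpha> n)) u + (4*u+1) * poly (pderiv (pderiv (FF \<alpha> n))) u"
  proof -
    have "of_nat (n*(n-1)) * poly (FF \<alpha> (n-2)) u = poly (smult (of_nat n * of_nat (n-1)) (FF \<alpha> (n-2))) u"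
      by (simp only: of_nat_mult poly_smult)
    also have "\<dots> = poly (smult 2 (pderiv (FF \<alpha> n)) + [:1,4:] * pderiv (pderiv (FF \<alpha> n))) u"
      unfolding PE2[OF n, of \<alpha>] ..
    finally show ?thesis by (simp add: algebra_simps)
  qed
next
  fix n :: nat and u :: complex assume "n \<ge> 3" "odd n"
  then obtain d where n: "n = 2*d+1" by (metis oddE)
  have d: "d \<ge> 1" using n \<open>n \<ge> 3\<close> by simp
  show "of_nat (n*(n-1)) * poly (FF \<alpha> (n-2)) u
         = 6 * poly (pderiv (FF \<alpha> n)) u + (4*u+1) * poly (pderiv (pderiv (FF \<alpha> n))) u"
  proof -
    have "of_nat (n*(n-1)) * poly (FF \<alpha> (n-2)) u = poly (smult (of_nat n * of_nat (n-1)) (FF \<alpha> (n-2))) u"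
      by (simp only: of_nat_mult poly_smult)
    also have "\<dots> = poly (smult 6 (pderiv (FF \<alpha> n)) + [:1,4:] * pderiv (pderiv (FF \<alpha> n))) u"
      unfolding PO2[OF n d, of \<alpha>] ..
    finally show ?thesis by (simp add: algebra_simps)
  qed
next
  fix n k :: nat assume "n \<ge> 2" "even n"
  then obtain e where n: "n = 2*Suc e" by (metis evenE Suc_pred' le_numeral_extra(2) mult_0_right not_less_eq_eq numeral_2_eq_2 zero_less_iff_neq_zero Suc_le_eq)
  show "of_nat n * fhat \<alpha> (n-1) k = fhat \<alpha> n (k+1)" by (rule fhat_even[OF n])
next
  fix n k :: nat assume "n \<ge> 1" "odd n"
  then obtain d where n: "n = 2*d+1" by (metis oddE)
  show "of_nat n * fhat \<alpha> (n-1) k = of_nat (4*k+2) * fhat \<alpha> n k + fhat \<alpha> n (k+1)"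
    by (rule fhat_odd[OF n])
next
  fix n k :: nat assume "n \<ge> 2" "even n"
  then obtain e where n: "n = 2*Suc e" by (metis evenE Suc_pred' le_numeral_extra(2) mult_0_right not_less_eq_eq numeral_2_eq_2 zero_less_iff_neq_zero Suc_le_eq)
  have n1: "n - 1 = 2*e+1" "n-1-1 = n-2" using n by auto
  have "of_nat (n*(n-1)) * fhat \<alpha> (n-2) k = of_nat n * (of_nat (n-1) * fhat \<alpha> (n-1-1) k)"
    unfolding n1(2) by (simp add: of_nat_mult)
  also have "\<dots> = of_nat n * (of_nat (4*k+2) * fhat \<alpha> (n-1) k + fhat \<alpha> (n-1) (k+1))"
    unfolding fhat_odd[OF n1(1)] ..
  also have "\<dots> = of_nat (4*k+2) * (of_nat n * fhat \<alpha> (n-1) k) + of_nat n * fhat \<alpha> (n-1) (k+1)"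
    by (simp add: algebra_simps)
  also have "\<dots> = of_nat (4*k+2) * fhat \<alpha> n (k+1) + fhat \<alpha> n (k+2)"
    unfolding fhat_even[OF n] by simp
  finally show "of_nat (n*(n-1)) * fhat \<alpha> (n-2) k
         = of_nat (4*k+2) * fhat \<alpha> n (k+1) + fhat \<alpha> n (k+2)" .
next
  fix n k :: nat assume "n \<ge> 3" "odd n"
  then obtain d where n: "n = 2*d+1" by (metis oddE)
  have d: "d \<ge> 1" using n \<open>n \<ge> 3\<close> by simp
  have n1: "n - 1 = 2*Suc (d-1)" "n-1-1 = n-2" using n d by auto
  have "of_nat (n*(n-1)) * fhat \<alpha> (n-2) k = of_nat n * (of_nat (n-1) * fhat \<alpha> (n-1-1) k)"
    unfolding n1(2) by (simp add: of_nat_mult)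
  also have "\<dots> = of_nat n * fhat \<alpha> (n-1) (k+1)"
    unfolding fhat_even[OF n1(1)] ..
  also have "\<dots> = of_nat (4*(k+1)+2) * fhat \<alpha> n (k+1) + fhat \<alpha> n (k+1+1)"
    by (rule fhat_odd[OF n])
  also have "\<dots> = of_nat (4*k+6) * fhat \<alpha> n (k+1) + fhat \<alpha> n (k+2)"
    by (simp add: algebra_simps)
  finally show "of_nat (n*(n-1)) * fhat \<alpha> (n-2) k
         = of_nat (4*k+6) * fhat \<alpha> n (k+1) + fhat \<alpha> n (k+2)" .
qed

end
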